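(* Let $p_n$ be the number of trees $t\in\mathcal{T}_n$ with $\gamma(t)\le 2$ (equivalently, trees having no subtree that is a caterpillar with 3 leaves, a "pitchfork"); $p_n$ is the coefficient of $x^n$ in $\frac{1-\sqrt{1-4x+8x^3}}{2}$. Then, with $R=\frac14(\sqrt5-1)$, $$\lim_{n\to\infty}\frac{\frac14\sqrt{\frac{4R-24R^3}{\pi n^3}}\left(\frac1R\right)^n}{p_n}=1.$$
   Context: $\mathcal{T}_n$ is the set of ordered rooted binary trees (every internal node has exactly two ordered children) with $n$ leaves. A tree is a caterpillar if every node is either a leaf or has at least one leaf among its direct children. The subtree of $t$ at a node $v$ consists of $v$ and all its descendants, and $\gamma(t)$ is the largest number of leaves of a caterpillar occurring as the subtree of $t$ at some node. *)

theory Defs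
  imports Complex_Main
begin

datatype btree = Leaf | Node btree btree

fun leaves :: "btree \<Rightarrow> nat" where
  "leaves Leaf = 1"
| "leaves (Node l r) = leaves l + leaves r"

fun subtrees :: "btree \<Rightarrow> btree set" where
  "subtrees Leaf = {Leaf}"
| "subtrees (Node l r) = insert (Node l r) (subtrees l \<union> subtrees r)"

fun is_leaf :: "btree \<Rightarrow> bool" where
  "is_leaf Leaf = True"
| "is_leaf (Node _ _) = False"

definition caterpillar :: "btree \<Rightarrow> bool" where
  "caterpillar t \<longleftrightarrow> (\<forall>s \<in> subtrees t. case s of Leaf \<Rightarrow> True
                                   | Node l r \<Rightarrow> is_leaf l \<or> is_leaf r)"

definition gamma :: "btree \<Rightarrow> nat" where
  "gamma t = Max {leaves s | s. s \<in> subtrees t \<and> caterpillar s}"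

definition p :: "nat \<Rightarrow> nat" where
  "p n = card {t. leaves t = n \<and> gamma t \<le> 2}"

end

theory Submission
  imports Defs "HOL-Computational_Algebra.Formal_Power_Series" "HOL-Analysis.Analysis" "HOL-Real_Asymp.Real_Asymp"
begin
definition pitch :: "btree \<Rightarrow> bool" where
  "pitch t \<longleftrightarrow> t = Node Leaf (Node Leaf Leaf) \<or> t = Node (Node Leaf Leaf) Leaf"

fun free :: "btree \<Rightarrow> bool" where
  "free Leaf = True"
| "free (Node l r) = (free l \<and> free r \<and> \<not> pitch (Node l r))"

lemma free_iff: "free t \<longleftrightarrow> (\<forall>s\<in>subtrees t. \<not> pitch s)"
  by (induction t) (auto simp: pitch_def)

lemma finite_subtrees: "finite (subtrees t)"
  by (induction t) auto

lemma self_subtrees: "t \<in> subtrees t"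
  by (cases t) auto

lemma Leaf_subtrees: "Leaf \<in> subtrees t"
  by (induction t) auto

lemma subtrees_trans: "s \<in> subtrees t \<Longrightarrow> subtrees s \<subseteq> subtrees t"
  by (induction t) auto

lemma leaves_pos: "leaves t \<ge> 1"
  by (induction t) auto

lemma leaves_1: "leaves t = 1 \<longleftrightarrow> t = Leaf"
  apply (cases t)
   apply simp
  subgoal for l r using leaves_pos[of l] leaves_pos[of r] by simp
  done

lemmas leaves_1' = leaves_1[simplified]

lemma caterpillar_Leaf[simp]: "caterpillar Leaf"
  by (simp add: caterpillar_def)

lemma caterpillar_Node: "caterpillar (Node l r) \<longleftrightarrow> (is_leaf l \<or> is_leaf r) \<and> caterpillar l \<and> caterpillar r"
  by (auto simp: caterpillar_def)

lemma is_leaf_iff: "is_leaf t \<longleftrightarrow> t = Leaf"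
  by (cases t) auto

lemma leaves_2: "leaves t = 2 \<Longrightarrow> t = Node Leaf Leaf"
proof (cases t)
  case (Node l r)
  assume "leaves t = 2"
  with Node leaves_pos[of l] leaves_pos[of r] have "leaves l = 1" "leaves r = 1" by auto
  with Node show ?thesis using leaves_1'[of l] leaves_1'[of r] by simp
qed simp

lemma cat_pitch: "caterpillar s \<Longrightarrow> leaves s \<ge> 3 \<Longrightarrow> \<exists>u\<in>subtrees s. pitch u"
proof (induction s)
  case Leaf then show ?case by simp
next
  case (Node l r)
  from Node.prems have c: "is_leaf l \<or> is_leaf r" "caterpillar l" "caterpillar r"
    by (auto simp: caterpillar_Node)
  show ?case
  proof (cases "is_leaf l")
    case True
    hence l: "l = Leaf" by (simp add: is_leaf_iff)
    with Node.prems have "leaves r \<ge> 2" by simp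
    then consider "leaves r \<ge> 3" | "leaves r = 2" by linarith
    then show ?thesis
    proof cases
      case 1 then show ?thesis using Node.IH(2) c by auto
    next
      case 2 then have "r = Node Leaf Leaf" by (rule leaves_2)
      with l show ?thesis by (auto simp: pitch_def)
    qed
  next
    case False
    hence r: "r = Leaf" using c by (simp add: is_leaf_iff)
    with Node.prems have "leaves l \<ge> 2" by simp
    then consider "leaves l \<ge> 3" | "leaves l = 2" by linarith
    then show ?thesis
    proof cases
      case 1 then show ?thesis using Node.IH(1) c by auto
    next
      case 2 then have "l = Node Leaf Leaf" by (rule leaves_2)
      with r show ?thesis by (auto simp: pitch_def)
    qed
  qed
qed

lemma pitch_cat: "pitch s \<Longrightarrow> caterpillar s \<and> leaves s = 3"
  by (auto simp: pitch_def caterpillar_Node)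

lemma gamma_le_iff: "gamma t \<le> 2 \<longleftrightarrow> free t"
proof -
  have eq: "{leaves s | s. s \<in> subtrees t \<and> caterpillar s} = leaves ` {s \<in> subtrees t. caterpillar s}"
    by auto
  have fin: "finite {leaves s | s. s \<in> subtrees t \<and> caterpillar s}"
    unfolding eq using finite_subtrees by simp
  have ne: "{leaves s | s. s \<in> subtrees t \<and> caterpillar s} \<noteq> {}"
    using Leaf_subtrees[of t] caterpillar_Leaf by blast
  have "gamma t \<le> 2 \<longleftrightarrow> (\<forall>s\<in>subtrees t. caterpillar s \<longrightarrow> leaves s \<le> 2)"
    unfolding gamma_def using Max_le_iff[OF fin ne] by blast
  also have "\<dots> \<longleftrightarrow> free t"
  proof
    assume H: "\<forall>s\<in>subtrees t. caterpillar s \<longrightarrow> leaves s \<le> 2"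
    show "free t" unfolding free_iff
    proof
      fix s assume "s \<in> subtrees t"
      with H show "\<not> pitch s" using pitch_cat by fastforce
    qed
  next
    assume "free t"
    hence F: "\<forall>s\<in>subtrees t. \<not> pitch s" by (simp add: free_iff)
    show "\<forall>s\<in>subtrees t. caterpillar s \<longrightarrow> leaves s \<le> 2"
    proof (intro ballI impI)
      fix s assume s: "s \<in> subtrees t" "caterpillar s"
      show "leaves s \<le> 2"
      proof (rule ccontr)
        assume "\<not> leaves s \<le> 2"
        then obtain u where "u \<in> subtrees s" "pitch u" using cat_pitch s(2) by fastforce
        with subtrees_trans[OF s(1)] F show False by blast
      qed
    qed
  qed
  finally show ?thesis .
qed

definition T :: "nat \<Rightarrow> btree set" where "T n = {t. leaves t = n \<and> free t}"

lemma p_T: "p n = card (T n)"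
  unfolding p_def T_def by (simp add: gamma_le_iff)

lemma finite_le: "finite {t. leaves t \<le> n}"
proof (induction n)
  case 0
  have "leaves t \<noteq> 0" for t using leaves_pos[of t] by linarith
  then have "{t. leaves t \<le> 0} = {}" by auto
  then show ?case by (metis finite.emptyI)
next
  case (Suc n)
  have "{t. leaves t \<le> Suc n} \<subseteq> insert Leaf ((\<lambda>(l,r). Node l r) ` ({t. leaves t \<le> n} \<times> {t. leaves t \<le> n}))"
  proof
    fix t assume "t \<in> {t. leaves t \<le> Suc n}"
    then show "t \<in> insert Leaf ((\<lambda>(l,r). Node l r) ` ({t. leaves t \<le> n} \<times> {t. leaves t \<le> n}))"
    proof (cases t)
      case (Node l r)
      with \<open>t \<in> {t. leaves t \<le> Suc n}\<close> leaves_pos[of l] leaves_pos[of r]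
      have "leaves l \<le> n" "leaves r \<le> n" by auto
      with Node show ?thesis by auto
    qed simp
  qed
  then show ?case by (rule finite_subset) (use Suc in auto)
qed

lemma finite_T: "finite (T n)"
  by (rule finite_subset[OF _ finite_le[of n]]) (auto simp: T_def)

lemma p0: "p 0 = 0"
proof -
  have "leaves t \<noteq> 0" for t using leaves_pos[of t] by linarith
  then have "T 0 = {}" by (auto simp: T_def)
  then show ?thesis by (simp add: p_T)
qed

lemma p1: "p 1 = 1"
proof -
  have "T 1 = {Leaf}" by (auto simp: T_def leaves_1')
  thus ?thesis by (simp add: p_T)
qed

lemma p_rec:
  assumes "n \<ge> 2"
  shows "p n + (if n = 3 then 2 else 0) = (\<Sum>k\<le>n. p k * p (n - k))"
proof -
  define D where "D = (\<Union>k\<in>{..n}. T k \<times> T (n - k))"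
  define P3 where "P3 = {(Leaf, Node Leaf Leaf), (Node Leaf Leaf, Leaf)}"
  have cardD: "card D = (\<Sum>k\<le>n. p k * p (n - k))"
    unfolding D_def p_T
    apply (subst card_UN_disjoint)
       apply (simp_all add: finite_T card_cartesian_product)
    apply (auto simp: T_def)
    done
  have finD: "finite D" unfolding D_def by (auto simp: finite_T)
  have TD: "T n = (\<lambda>(l,r). Node l r) ` (D - P3)"
  proof
    show "T n \<subseteq> (\<lambda>(l,r). Node l r) ` (D - P3)"
    proof
      fix t assume t: "t \<in> T n"
      then obtain l r where lr: "t = Node l r" using assms by (cases t) (auto simp: T_def)
      with t have "(l, r) \<in> D - P3" unfolding D_def P3_def T_def
        by (auto simp: pitch_def)
      with lr show "t \<in> (\<lambda>(l,r). Node l r) ` (D - P3)" by force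
    qed
  next
    show "(\<lambda>(l,r). Node l r) ` (D - P3) \<subseteq> T n"
      unfolding D_def P3_def T_def by (auto simp: pitch_def)
  qed
  have inj: "inj_on (\<lambda>(l,r). Node l r) (D - P3)" by (auto simp: inj_on_def)
  have "p n = card (D - P3)" unfolding p_T TD using card_image[OF inj] by simp
  also have "\<dots> = card D - card (D \<inter> P3)"
    by (metis Diff_Int2 card_Diff_subset_Int finD finite_Int inf.idem inf_commute)
  finally have pn: "p n = card D - card (D \<inter> P3)" .
  have "D \<inter> P3 = (if n = 3 then P3 else {})"
    unfolding D_def P3_def T_def by (auto simp: pitch_def)
  moreover have "card P3 = 2" by (simp add: P3_def)
  moreover have "card (D \<inter> P3) \<le> card D" by (simp add: card_mono finD)
  ultimately show ?thesis using pn cardD by auto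
qed

definition g :: "nat \<Rightarrow> real" where "g k = (1/2) gchoose k"
definition sq :: "real \<Rightarrow> real fps" where "sq c = Abs_fps (\<lambda>k. g k * (-c)^k)"

lemma one_gchoose: "((1::real) gchoose n) = (if n \<le> 1 then 1 else 0)"
proof -
  have "((1::real) gchoose n) = of_nat (1 choose n)"
    using binomial_gbinomial[where 'a=real, of 1 n] by simp
  moreover have "(1 choose n) = (if n \<le> 1 then 1 else 0)"
    by (cases n) (auto simp: binomial_eq_0)
  ultimately show ?thesis by simp
qed

lemma sq_sq: "sq c * sq c = 1 - fps_const c * fps_X"
proof (rule fps_ext)
  fix n
  have "fps_nth (sq c * sq c) n = (\<Sum>i=0..n. g i * (-c)^i * (g (n-i) * (-c)^(n-i)))"
    by (simp add: fps_mult_nth sq_def)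
  also have "\<dots> = (\<Sum>i=0..n. g i * g (n-i) * (-c)^n)"
    by (rule sum.cong) (auto simp: power_add[symmetric])
  also have "\<dots> = (\<Sum>i=0..n. g i * g (n-i)) * (-c)^n"
    by (simp add: sum_distrib_right)
  also have "(\<Sum>i=0..n. g i * g (n-i)) = (1/2 + 1/2) gchoose n"
    unfolding g_def by (rule gbinomial_Vandermonde)
  also have "(1/2 + 1/2 :: real) = 1" by simp
  finally show "fps_nth (sq c * sq c) n = fps_nth (1 - fps_const c * fps_X) n"
    by (cases n) (auto simp: one_gchoose)
qed

lemma fps_sq_unique:
  fixes Q S :: "real fps"
  assumes "Q * Q = S * S" "fps_nth Q 0 = fps_nth S 0" "fps_nth S 0 \<noteq> 0"
  shows "Q = S"
proof -
  have "(Q - S) * (Q + S) = 0" using assms(1) by (simp add: algebra_simps)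
  moreover have "Q + S \<noteq> 0"
  proof
    assume "Q + S = 0"
    hence "fps_nth (Q + S) 0 = 0" by simp
    with assms(2,3) show False by simp
  qed
  ultimately show ?thesis by simp
qed

definition a0 :: real where "a0 = 1 + sqrt 5"
definition b0 :: real where "b0 = 1 - sqrt 5"

definition PP :: "real fps" where "PP = Abs_fps (\<lambda>n. real (p n))"
definition SS :: "real fps" where "SS = sq a0 * (sq b0 * sq 2)"

lemma PP_sq: "PP * PP = PP - fps_X + 2 * fps_X ^ 3"
proof (rule fps_ext)
  fix n
  have "fps_nth (PP * PP) n = real (\<Sum>k\<le>n. p k * p (n - k))"
    by (simp add: fps_mult_nth PP_def atLeast0AtMost)
  also have "\<dots> = real (p n) - (if n = 1 then 1 else 0) + (if n = 3 then 2 else 0)"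
  proof (cases "n \<ge> 2")
    case True
    from p_rec[OF True] have "real (p n + (if n = 3 then 2 else 0)) = real (\<Sum>k\<le>n. p k * p (n - k))"
      by simp
    with True show ?thesis by (auto split: if_splits)
  next
    case False
    then consider "n = 0" | "n = 1" by linarith
    then show ?thesis using p1 by cases (simp_all add: p0)
  qed
  finally show "fps_nth (PP * PP) n = fps_nth (PP - fps_X + 2 * fps_X ^ 3) n"
    by (simp add: PP_def numeral_fps_const)
qed

lemma SS_sq: "SS * SS = 1 - 4 * fps_X + 8 * fps_X ^ 3"
proof -
  have "SS * SS = (sq a0 * sq a0) * ((sq b0 * sq b0) * (sq 2 * sq 2))"
    unfolding SS_def by (simp add: ac_simps)
  also have "\<dots> = (1 - fps_const a0 * fps_X) * (1 - fps_const b0 * fps_X) * (1 - fps_const 2 * fps_X)"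
    by (simp add: sq_sq ac_simps)
  also have "(1 - fps_const a0 * fps_X) * (1 - fps_const b0 * fps_X)
      = 1 - fps_const (a0 + b0) * fps_X + fps_const (a0 * b0) * fps_X ^ 2"
    by (simp add: algebra_simps power2_eq_square flip: fps_const_add fps_const_mult)
  also have "a0 + b0 = 2" by (simp add: a0_def b0_def)
  also have "a0 * b0 = -4" by (simp add: a0_def b0_def algebra_simps)
  also have "(1 - fps_const 2 * fps_X + fps_const (-4) * fps_X ^ 2) * (1 - fps_const 2 * fps_X)
      = (1 - 2 * fps_X - 4 * fps_X ^ 2) * (1 - 2 * (fps_X :: real fps))"
    by (simp add: numeral_fps_const)
  also have "\<dots> = 1 - 4 * fps_X + 8 * (fps_X ^ 3 :: real fps)"
    by (simp add: algebra_simps power2_eq_square power3_eq_cube)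
  finally show ?thesis .
qed

lemma QQ_eq: "1 - 2 * PP = SS"
proof (rule fps_sq_unique)
  have "(1 - 2 * PP) * (1 - 2 * PP) = 1 - 4 * PP + 4 * (PP * PP)"
    by (simp add: algebra_simps)
  also have "\<dots> = SS * SS" unfolding SS_sq PP_sq by (simp add: algebra_simps)
  finally show "(1 - 2 * PP) * (1 - 2 * PP) = SS * SS" .
  show "fps_nth (1 - 2 * PP) 0 = fps_nth SS 0"
    by (simp add: PP_def SS_def sq_def g_def p0 numeral_fps_const)
  show "fps_nth SS 0 \<noteq> 0" by (simp add: SS_def sq_def g_def)
qed

lemma SS_nth: "n \<ge> 1 \<Longrightarrow> fps_nth SS n = - 2 * real (p n)"
  using arg_cong[OF QQ_eq, of "\<lambda>f. fps_nth f n"] by (simp add: PP_def numeral_fps_const)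

definition e :: "nat \<Rightarrow> real" where "e k = - g k * (-1)^k * real k * sqrt (real k)"

lemma Gamma_mhalf: "Gamma (-1/2 :: real) = - 2 * sqrt pi"
proof -
  have nz: "(-1/2 :: real) \<notin> \<int>\<^sub>\<le>\<^sub>0"
  proof
    assume "(-1/2 :: real) \<in> \<int>\<^sub>\<le>\<^sub>0"
    then obtain k :: nat where "(-1/2 :: real) = - of_nat k" by (auto elim!: nonpos_Ints_cases')
    hence "real k * 2 = 1" by simp
    hence "k * 2 = 1" by linarith
    thus False by simp
  qed
  have "Gamma (-1/2 + 1 :: real) = (-1/2) * Gamma (-1/2)" by (rule Gamma_plus1[OF nz])
  moreover have "(-1/2 + 1 :: real) = 1/2" by simp
  ultimately show ?thesis using Gamma_one_half_real by simp
qed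

lemma Gamma_mhalf': "Gamma (-(1/2) :: real) = - 2 * sqrt pi"
  using Gamma_mhalf by simp

lemma e_eq: "n \<ge> 1 \<Longrightarrow> e n = - (real n / (real n - 1/2)) / Gamma_series (-1/2) n"
proof -
  assume n: "n \<ge> 1"
  define P where "P = pochhammer (-1/2 :: real) n"
  have g: "g n = (-1)^n * P / fact n" unfolding g_def P_def by (simp add: gbinomial_pochhammer)
  have "exp (-1/2 * ln (real n)) = real n powr (-(1/2))" using n by (simp add: powr_def)
  also have "\<dots> = inverse (real n powr (1/2))" by (rule powr_minus)
  also have "\<dots> = 1 / sqrt (real n)" by (simp add: powr_half_sqrt inverse_eq_divide)
  finally have ex: "exp (-1/2 * ln (real n)) = 1 / sqrt (real n)" .
  have GS: "Gamma_series (-1/2) n = fact n * (1 / sqrt (real n)) / (P * (real n - 1/2))"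
    unfolding Gamma_series_def P_def using ex by (simp add: pochhammer_Suc algebra_simps)
  have sq: "sqrt (real n) > 0" using n by simp
  have m1: "(-1::real)^n * (-1)^n = 1" by (simp flip: power_mult_distrib)
  have "e n = - ((-1::real)^n * (-1)^n) * (P / fact n) * real n * sqrt (real n)"
    unfolding e_def g by (simp add: mult_ac)
  hence en: "e n = - P / fact n * real n * sqrt (real n)" unfolding m1 by simp
  show ?thesis
  proof (cases "P = 0")
    case True thus ?thesis unfolding en GS by simp
  next
    case False
    have h: "real n - 1/2 \<noteq> 0" using n by simp
    have f: "(fact n :: real) \<noteq> 0" by simp
    have ss: "sqrt (real n) * sqrt (real n) = real n" by simp
    have "- (real n / (real n - 1/2)) / (fact n * (1 / sqrt (real n)) / (P * (real n - 1/2)))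
        = - (real n / (real n - 1/2)) * (P * (real n - 1/2)) * sqrt (real n) / fact n"
      using sq f False h by (simp add: divide_simps)
    also have "\<dots> = - P / fact n * real n * sqrt (real n)"
      using h by (simp add: divide_simps)
    finally show ?thesis unfolding en GS by simp
  qed
qed

lemma e_lim: "e \<longlonglongrightarrow> 1 / (2 * sqrt pi)"
proof -
  have l1: "(\<lambda>n. real n / (real n - 1/2)) \<longlonglongrightarrow> 1" by real_asymp
  have l2: "Gamma_series (-1/2) \<longlonglongrightarrow> Gamma (-1/2::real)" by (rule Gamma_series_LIMSEQ)
  have "(\<lambda>n. - (real n / (real n - 1/2)) / Gamma_series (-1/2) n) \<longlonglongrightarrow> - 1 / Gamma (-1/2::real)"
    by (intro tendsto_divide tendsto_minus l1 l2) (simp add: Gamma_mhalf Gamma_mhalf')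
  hence "(\<lambda>n. - (real n / (real n - 1/2)) / Gamma_series (-1/2) n) \<longlonglongrightarrow> 1 / (2 * sqrt pi)"
    by (simp add: Gamma_mhalf Gamma_mhalf')
  moreover have "eventually (\<lambda>n. - (real n / (real n - 1/2)) / Gamma_series (-1/2) n = e n) sequentially"
    using eventually_ge_at_top[of 1] by eventually_elim (simp add: e_eq)
  ultimately show ?thesis by (rule Lim_transform_eventually)
qed

lemma g_bound: "\<bar>g k\<bar> \<le> 1"
proof (induction k)
  case 0 then show ?case by (simp add: g_def)
next
  case (Suc k)
  have "(1/2::real) * g k = real k * g k + real (Suc k) * g (Suc k)"
    unfolding g_def by (rule gbinomial_mult_1)
  hence "real (Suc k) * g (Suc k) = g k * (1/2 - real k)"
    by (simp add: algebra_simps)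
  hence eq: "g (Suc k) = g k * ((1/2 - real k) / real (Suc k))"
    by (simp add: eq_divide_eq mult.commute del: of_nat_Suc)
  have hk: "\<bar>1/2 - real k\<bar> \<le> real (Suc k)" by simp
  have q: "\<bar>(1/2 - real k) / real (Suc k)\<bar> \<le> 1"
    using hk by (simp add: abs_divide del: of_nat_Suc)
  have "\<bar>g (Suc k)\<bar> = \<bar>g k\<bar> * \<bar>(1/2 - real k) / real (Suc k)\<bar>"
    unfolding eq by (rule abs_mult)
  also have "\<dots> \<le> \<bar>g k\<bar> * 1" by (rule mult_left_mono[OF q abs_ge_zero])
  finally have "\<bar>g (Suc k)\<bar> \<le> \<bar>g k\<bar> * 1" .
  with Suc show ?case by simp
qed

definition ra :: real where "ra = (sqrt 5 - 1) / 4"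
definition H :: "nat \<Rightarrow> real" where "H j = fps_nth (sq b0 * sq 2) j"
definition c :: "nat \<Rightarrow> real" where "c j = H j * ra ^ j"
definition LL :: real where "LL = 1 / (2 * sqrt pi)"
definition w :: "nat \<Rightarrow> nat \<Rightarrow> real" where
  "w n j = (real n / real (n - j)) * sqrt (real n / real (n - j))"
definition f :: "nat \<Rightarrow> nat \<Rightarrow> real" where
  "f j n = (if j < n then e (n - j) * w n j * c j else 0)"
definition X :: "nat \<Rightarrow> real" where "X n = real n * sqrt (real n) * ra ^ n"

lemma s_gt2: "2 < sqrt (5::real)"
  by (rule real_less_rsqrt) simp

lemma s_lt3: "sqrt (5::real) < 3"
  by (rule real_less_lsqrt) simp_all

lemma s_sq: "sqrt (5::real) ^ 2 = 5" by simp

lemma ra_pos: "0 < ra" using s_gt2 by (simp add: ra_def)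

lemma ra_a0: "ra * a0 = 1"
proof -
  have "ra * a0 = (sqrt 5 ^ 2 - 1) / 4" unfolding ra_def a0_def by (simp add: algebra_simps power2_eq_square)
  thus ?thesis by simp
qed

lemma rho_lt1: "2 * ra < 1" using s_lt3 by (simp add: ra_def)

lemma b0ra: "b0 * ra = (sqrt 5 - 3) / 2"
proof -
  have "b0 * ra = (2 * sqrt 5 - 1 - sqrt 5 ^ 2) / 4" unfolding ra_def b0_def by (simp add: algebra_simps power2_eq_square)
  thus ?thesis by simp
qed

lemma b0ra_abs: "\<bar>b0 * ra\<bar> < 1" using s_gt2 s_lt3 by (simp add: b0ra)

lemma b0_abs: "\<bar>b0\<bar> \<le> 2" using s_gt2 s_lt3 by (simp add: b0_def)

lemma sq_nth: "fps_nth (sq x) k = g k * (-x)^k" by (simp add: sq_def)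

lemma sq_bound: assumes "\<bar>x\<bar> \<le> 2" shows "\<bar>fps_nth (sq x) k\<bar> \<le> 2 ^ k"
proof -
  have "\<bar>fps_nth (sq x) k\<bar> = \<bar>g k\<bar> * \<bar>x\<bar> ^ k" by (simp add: sq_nth abs_mult power_abs)
  also have "\<dots> \<le> 1 * 2 ^ k"
    by (rule mult_mono[OF g_bound power_mono[OF assms]]) simp_all
  finally show ?thesis by simp
qed

lemma H_bound: "\<bar>H j\<bar> \<le> (real j + 1) * 2 ^ j"
proof -
  have "\<bar>H j\<bar> = \<bar>\<Sum>i=0..j. fps_nth (sq b0) i * fps_nth (sq 2) (j - i)\<bar>"
    by (simp add: H_def fps_mult_nth)
  also have "\<dots> \<le> (\<Sum>i=0..j. \<bar>fps_nth (sq b0) i * fps_nth (sq 2) (j - i)\<bar>)"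
    by (rule sum_abs)
  also have "\<dots> \<le> (\<Sum>i=0..j. (2::real) ^ j)"
  proof (rule sum_mono)
    fix i assume i: "i \<in> {0..j}"
    have "\<bar>fps_nth (sq b0) i * fps_nth (sq 2) (j - i)\<bar> \<le> 2 ^ i * 2 ^ (j - i)"
      unfolding abs_mult
      by (rule mult_mono[OF sq_bound[OF b0_abs] sq_bound]) simp_all
    also have "\<dots> = 2 ^ j" using i by (simp flip: power_add)
    finally show "\<bar>fps_nth (sq b0) i * fps_nth (sq 2) (j - i)\<bar> \<le> 2 ^ j" .
  qed
  also have "\<dots> = (real j + 1) * 2 ^ j" by simp
  finally show ?thesis .
qed

lemma c_bound: "\<bar>c j\<bar> \<le> (real j + 1) * (2 * ra) ^ j"
proof -
  have "\<bar>c j\<bar> = \<bar>H j\<bar> * ra ^ j" using ra_pos by (simp add: c_def abs_mult)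
  also have "\<dots> \<le> (real j + 1) * 2 ^ j * ra ^ j"
    by (rule mult_right_mono[OF H_bound]) (use ra_pos in simp)
  also have "\<dots> = (real j + 1) * (2 * ra) ^ j" by (simp add: power_mult_distrib)
  finally show ?thesis .
qed

lemma summable_poly3:
  fixes r :: real
  assumes r: "0 < r" "r < 1"
  shows "summable (\<lambda>j. (real j + 1) ^ 3 * r ^ j)"
proof -
  define q where "q = (1 + r) / 2"
  have q: "r < q" "q < 1" using r by (simp_all add: q_def)
  have l: "(\<lambda>n. (real n + 2) / (real n + 1)) \<longlonglongrightarrow> 1" by real_asymp
  have "(\<lambda>n. ((real n + 2) / (real n + 1)) ^ 3 * r) \<longlonglongrightarrow> 1 ^ 3 * r"
    by (intro tendsto_intros l)
  hence "eventually (\<lambda>n. ((real n + 2) / (real n + 1)) ^ 3 * r < q) sequentially"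
    using q by (intro order_tendstoD(2)) simp_all
  then obtain N where N: "\<And>n. n \<ge> N \<Longrightarrow> ((real n + 2) / (real n + 1)) ^ 3 * r < q"
    by (auto simp: eventually_sequentially)
  show ?thesis
  proof (rule summable_ratio_test[OF q(2)])
    fix n assume "n \<ge> N"
    have eq: "(real (Suc n) + 1) ^ 3 * r ^ Suc n = (((real n + 2) / (real n + 1)) ^ 3 * r) * ((real n + 1) ^ 3 * r ^ n)"
      by (simp add: field_simps)
    have "norm ((real (Suc n) + 1) ^ 3 * r ^ Suc n) = (((real n + 2) / (real n + 1)) ^ 3 * r) * ((real n + 1) ^ 3 * r ^ n)"
      using r unfolding eq by simp
    also have "\<dots> \<le> q * ((real n + 1) ^ 3 * r ^ n)"
      by (rule mult_right_mono) (use N[OF \<open>n \<ge> N\<close>] r in auto)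
    also have "\<dots> = q * norm ((real n + 1) ^ 3 * r ^ n)" using r by simp
    finally show "norm ((real (Suc n) + 1) ^ 3 * r ^ Suc n) \<le> q * norm ((real n + 1) ^ 3 * r ^ n)" .
  qed
qed

lemma summable_rho: "summable (\<lambda>j. (real j + 1) ^ 3 * (2 * ra) ^ j)"
  using ra_pos rho_lt1 by (intro summable_poly3) simp_all

lemma sqrt_series_sum:
  fixes z :: real
  assumes "\<bar>z\<bar> < 1"
  shows "(\<lambda>i. g i * z ^ i) sums sqrt (1 + z)" "summable (\<lambda>i. norm (g i * z ^ i))"
proof -
  have "(\<lambda>i. ((1/2) gchoose i) * z ^ i) sums (1 + z) powr (1/2)"
    by (rule gen_binomial_real[OF assms])
  moreover have "(1 + z) powr (1/2) = sqrt (1 + z)" using assms by (intro powr_half_sqrt) simp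
  ultimately show "(\<lambda>i. g i * z ^ i) sums sqrt (1 + z)" by (simp add: g_def)
  show "summable (\<lambda>i. norm (g i * z ^ i))"
  proof (rule summable_comparison_test)
    show "\<exists>N. \<forall>n\<ge>N. norm (norm (g n * z ^ n)) \<le> \<bar>z\<bar> ^ n"
    proof (intro exI allI impI)
      fix n :: nat
      have "norm (norm (g n * z ^ n)) = \<bar>g n\<bar> * \<bar>z\<bar> ^ n" by (simp add: abs_mult power_abs)
      also have "\<dots> \<le> 1 * \<bar>z\<bar> ^ n" by (rule mult_right_mono[OF g_bound]) simp
      finally show "norm (norm (g n * z ^ n)) \<le> \<bar>z\<bar> ^ n" by simp
    qed
    show "summable (\<lambda>n. \<bar>z\<bar> ^ n)" using assms by (intro summable_geometric) simp
  qed
qed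

lemma neg_mult_pow: "(- (x * y)) ^ i = (- x) ^ i * (y :: real) ^ i"
  by (metis minus_mult_left power_mult_distrib)

lemma c_sum: "suminf c = sqrt (1 - b0 * ra) * sqrt (1 - 2 * ra)"
proof -
  define u where "u i = g i * (- (b0 * ra)) ^ i" for i
  define v where "v i = g i * (- (2 * ra)) ^ i" for i
  have z1: "\<bar>- (b0 * ra)\<bar> < 1" using b0ra_abs by simp
  have z2: "\<bar>- (2 * ra)\<bar> < 1" using rho_lt1 ra_pos by simp
  note su = sqrt_series_sum[OF z1] and sv = sqrt_series_sum[OF z2]
  have "suminf u * suminf v = (\<Sum>k. \<Sum>i\<le>k. u i * v (k - i))"
    by (rule Cauchy_product) (use su sv in \<open>simp_all add: u_def v_def\<close>)
  moreover have "suminf u = sqrt (1 - b0 * ra)" using su(1) unfolding u_def by (simp add: sums_iff)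
  moreover have "suminf v = sqrt (1 - 2 * ra)" using sv(1) unfolding v_def by (simp add: sums_iff)
  moreover have "(\<lambda>k. \<Sum>i\<le>k. u i * v (k - i)) = c"
  proof
    fix k
    have "c k = (\<Sum>i\<le>k. fps_nth (sq b0) i * fps_nth (sq 2) (k - i) * ra ^ k)"
      by (simp add: c_def H_def fps_mult_nth atLeast0AtMost sum_distrib_right)
    also have "\<dots> = (\<Sum>i\<le>k. u i * v (k - i))"
    proof (rule sum.cong)
      fix i assume "i \<in> {..k}"
      hence "ra ^ k = ra ^ i * ra ^ (k - i)" by (simp flip: power_add)
      thus "fps_nth (sq b0) i * fps_nth (sq 2) (k - i) * ra ^ k = u i * v (k - i)"
        unfolding sq_nth u_def v_def neg_mult_pow by (simp add: mult_ac)
    qed simp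
    finally show "(\<Sum>i\<le>k. u i * v (k - i)) = c k" by simp
  qed
  ultimately show ?thesis by simp
qed

lemma c_summable: "summable c"
proof (rule summable_comparison_test)
  show "\<exists>N. \<forall>n\<ge>N. norm (c n) \<le> (real n + 1) ^ 3 * (2 * ra) ^ n"
  proof (intro exI allI impI)
    fix n :: nat
    have "norm (c n) \<le> (real n + 1) * (2 * ra) ^ n" using c_bound by simp
    also have "\<dots> \<le> (real n + 1) ^ 3 * (2 * ra) ^ n"
    proof (rule mult_right_mono)
      have "(real n + 1) ^ 1 \<le> (real n + 1) ^ 3" by (rule power_increasing) simp_all
      thus "real n + 1 \<le> (real n + 1) ^ 3" by simp
    qed (use ra_pos in simp)
    finally show "norm (c n) \<le> (real n + 1) ^ 3 * (2 * ra) ^ n" .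
  qed
qed (rule summable_rho)

lemma term_eq:
  assumes "j < n"
  shows "X n * (H j * fps_nth (sq a0) (n - j)) = - f j n"
proof -
  define k where "k = n - j"
  have k: "k \<ge> 1" "n = j + k" using assms by (simp_all add: k_def)
  have kpos: "real k > 0" "sqrt (real k) > 0" using k by simp_all
  have A: "ra ^ n * (-a0) ^ k = ra ^ j * (-1) ^ k"
  proof -
    have e1: "ra ^ n = ra ^ j * ra ^ k" using k(2) by (simp add: power_add)
    have e2: "(-a0) ^ k = (-1) ^ k * a0 ^ k" by (rule power_minus)
    have e3: "ra ^ k * a0 ^ k = 1" using ra_a0 by (simp flip: power_mult_distrib)
    have "ra ^ n * (-a0) ^ k = ra ^ j * (-1) ^ k * (ra ^ k * a0 ^ k)"
      unfolding e1 e2 by (simp only: mult_ac)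
    thus ?thesis unfolding e3 by simp
  qed
  have B: "real k * sqrt (real k) * (real n / real k * sqrt (real n / real k)) = real n * sqrt (real n)"
    using kpos by (simp add: real_sqrt_divide field_simps)
  have "X n * (H j * fps_nth (sq a0) (n - j)) = (real n * sqrt (real n)) * (ra ^ n * (-a0) ^ k) * H j * g k"
    by (simp add: X_def sq_nth k_def mult_ac)
  also have "\<dots> = (real n * sqrt (real n)) * (ra ^ j * (-1) ^ k) * H j * g k" by (simp only: A)
  finally have L: "X n * (H j * fps_nth (sq a0) (n - j)) = (real n * sqrt (real n)) * (ra ^ j * (-1) ^ k) * H j * g k" .
  have "- f j n = g k * (-1) ^ k * (real k * sqrt (real k) * (real n / real k * sqrt (real n / real k))) * (H j * ra ^ j)"
    using assms by (simp add: f_def e_def w_def k_def c_def mult_ac)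
  also have "\<dots> = g k * (-1) ^ k * (real n * sqrt (real n)) * (H j * ra ^ j)" by (simp only: B)
  finally show ?thesis unfolding L by (simp add: mult_ac)
qed

lemma sqrt_le_self: "1 \<le> (x::real) \<Longrightarrow> sqrt x \<le> x"
  by (rule real_le_lsqrt) (simp_all add: power2_eq_square)

lemma w_bound:
  assumes "j < n" shows "0 \<le> w n j" "w n j \<le> (real j + 1) ^ 2"
proof -
  define k where "k = n - j"
  have k: "k \<ge> 1" "n = j + k" using assms by (simp_all add: k_def)
  define q where "q = real n / real k"
  have wq: "w n j = q * sqrt q" by (simp add: w_def q_def k_def)
  have "j * 1 \<le> j * k" using k(1) by (rule mult_le_mono2)
  hence "n \<le> (j + 1) * k" using k(2) by (simp add: algebra_simps)
  hence "real n \<le> (real j + 1) * real k" by (metis of_nat_le_iff of_nat_mult of_nat_Suc Suc_eq_plus1 add.commute)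
  hence q1: "q \<le> real j + 1" using k(1) by (simp add: q_def divide_le_eq mult.commute)
  have q0: "1 \<le> q" using k by (simp add: q_def)
  have sq: "sqrt q \<le> q" using q0 by (rule sqrt_le_self)
  show "0 \<le> w n j" using q0 by (simp add: wq)
  have "q * sqrt q \<le> q * q" using sq q0 by (simp add: mult_left_mono)
  also have "\<dots> \<le> (real j + 1) * (real j + 1)" using q1 q0 by (intro mult_mono) simp_all
  finally show "w n j \<le> (real j + 1) ^ 2" by (simp add: wq power2_eq_square)
qed

lemma e_bounded: obtains Mb where "Mb > 0" "\<And>n. \<bar>e n\<bar> \<le> Mb"
proof -
  have "Bseq e" using e_lim by (intro convergent_imp_Bseq convergentI)
  then obtain K where K: "K > 0" "\<And>n. norm (e n) \<le> K" by (auto elim: BseqE)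
  show ?thesis by (rule that[of K]) (use K in auto)
qed

lemma f_lim: "(\<lambda>n. f j n) \<longlonglongrightarrow> LL * c j"
proof (rule LIMSEQ_offset[where k = "Suc j"])
  have l: "(\<lambda>n. (real n + (real j + 1)) / (real n + 1)) \<longlonglongrightarrow> 1" by real_asymp
  have "(\<lambda>n. e (Suc n) * (((real n + (real j + 1)) / (real n + 1)) * sqrt ((real n + (real j + 1)) / (real n + 1))) * c j)
        \<longlonglongrightarrow> LL * (1 * sqrt 1) * c j"
    by (intro tendsto_intros l) (use LIMSEQ_Suc[OF e_lim] in \<open>simp add: LL_def\<close>)
  moreover have "f j (n + Suc j) = e (Suc n) * (((real n + (real j + 1)) / (real n + 1)) * sqrt ((real n + (real j + 1)) / (real n + 1))) * c j" for n
    by (simp add: f_def w_def Suc_diff_le algebra_simps)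
  ultimately show "(\<lambda>n. f j (n + Suc j)) \<longlonglongrightarrow> LL * c j" by simp
qed

lemma main_lim: "(\<lambda>n. \<Sum>j<n. f j n) \<longlonglongrightarrow> LL * suminf c"
proof -
  obtain Mb where Mb: "Mb > 0" "\<And>n. \<bar>e n\<bar> \<le> Mb" using e_bounded by blast
  define M where "M j = Mb * ((real j + 1) ^ 2 * \<bar>c j\<bar>)" for j
  have fb: "norm (f j n) \<le> M j" for j n
  proof (cases "j < n")
    case True
    have "norm (f j n) = \<bar>e (n - j)\<bar> * w n j * \<bar>c j\<bar>"
      using True w_bound(1)[OF True] by (simp add: f_def abs_mult)
    also have "\<dots> \<le> Mb * ((real j + 1) ^ 2 * \<bar>c j\<bar>)"
      unfolding mult.assoc
      by (intro mult_mono Mb w_bound[OF True] mult_nonneg_nonneg) (use w_bound(1)[OF True] Mb in auto)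
    finally show ?thesis by (simp add: M_def)
  next
    case False thus ?thesis using Mb by (simp add: f_def M_def)
  qed
  have sM: "summable M"
  proof (rule summable_comparison_test)
    show "\<exists>N. \<forall>n\<ge>N. norm (M n) \<le> Mb * ((real n + 1) ^ 3 * (2 * ra) ^ n)"
    proof (intro exI allI impI)
      fix n :: nat
      have "norm (M n) = Mb * ((real n + 1) ^ 2 * \<bar>c n\<bar>)" using Mb by (simp add: M_def abs_mult)
      also have "\<dots> \<le> Mb * ((real n + 1) ^ 2 * ((real n + 1) * (2 * ra) ^ n))"
        by (intro mult_left_mono c_bound) (use Mb in auto)
      also have "\<dots> = Mb * ((real n + 1) ^ 3 * (2 * ra) ^ n)" by (simp add: power2_eq_square power3_eq_cube)
      finally show "norm (M n) \<le> Mb * ((real n + 1) ^ 3 * (2 * ra) ^ n)" .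
    qed
    show "summable (\<lambda>n. Mb * ((real n + 1) ^ 3 * (2 * ra) ^ n))"
      by (intro summable_mult summable_rho)
  qed
  have T: "eventually (\<lambda>n. summable (\<lambda>k. norm (f k n))) sequentially \<and>
           summable (\<lambda>n. norm (LL * c n)) \<and>
           ((\<lambda>n. suminf (\<lambda>k. f k n)) \<longlonglongrightarrow> suminf (\<lambda>j. LL * c j))"
    by (rule tannerys_theorem[OF f_lim _ sM]) (use fb in \<open>auto intro!: always_eventually\<close>)
  have "suminf (\<lambda>k. f k n) = (\<Sum>j<n. f j n)" for n
    by (rule suminf_finite) (auto simp: f_def)
  moreover have "suminf (\<lambda>j. LL * c j) = LL * suminf c"
    by (rule suminf_mult[OF c_summable])
  ultimately show ?thesis using T by simp
qed

lemma XS: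
  assumes "n \<ge> 1"
  shows "X n * fps_nth SS n = - (\<Sum>j<n. f j n) + real n * sqrt (real n) * c n"
proof -
  have "fps_nth SS n = fps_nth ((sq b0 * sq 2) * sq a0) n" by (simp add: SS_def mult.commute)
  also have "\<dots> = (\<Sum>j\<le>n. H j * fps_nth (sq a0) (n - j))"
    by (simp add: fps_mult_nth H_def atLeast0AtMost)
  also have "\<dots> = (\<Sum>j<n. H j * fps_nth (sq a0) (n - j)) + H n"
    by (simp add: lessThan_Suc_atMost[symmetric] sq_nth g_def)
  finally have "X n * fps_nth SS n = (\<Sum>j<n. X n * (H j * fps_nth (sq a0) (n - j))) + X n * H n"
    by (simp add: algebra_simps sum_distrib_left)
  also have "(\<Sum>j<n. X n * (H j * fps_nth (sq a0) (n - j))) = (\<Sum>j<n. - f j n)"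
    by (rule sum.cong) (simp_all add: term_eq)
  also have "X n * H n = real n * sqrt (real n) * c n" by (simp add: X_def c_def mult_ac)
  finally show ?thesis by (simp add: sum_negf)
qed

lemma Xc0: "(\<lambda>n. real n * sqrt (real n) * c n) \<longlonglongrightarrow> 0"
proof (rule tendsto_0_le[where K = 1])
  show "(\<lambda>n. (real n + 1) ^ 3 * (2 * ra) ^ n) \<longlonglongrightarrow> 0"
    by (rule summable_LIMSEQ_zero[OF summable_rho])
  show "eventually (\<lambda>n. norm (real n * sqrt (real n) * c n) \<le> norm ((real n + 1) ^ 3 * (2 * ra) ^ n) * 1) sequentially"
  proof (intro always_eventually allI)
    fix n :: nat
    have s1: "sqrt (real n) \<le> real n + 1"
    proof -
      have "sqrt (real n) \<le> sqrt (real n + 1)" by simp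
      also have "\<dots> \<le> real n + 1" by (rule sqrt_le_self) simp
      finally show ?thesis .
    qed
    have "norm (real n * sqrt (real n) * c n) = real n * sqrt (real n) * \<bar>c n\<bar>" by (simp add: abs_mult)
    also have "\<dots> \<le> ((real n + 1) * (real n + 1)) * ((real n + 1) * (2 * ra) ^ n)"
      by (intro mult_mono c_bound s1) simp_all
    also have "\<dots> = norm ((real n + 1) ^ 3 * (2 * ra) ^ n) * 1"
      using ra_pos by (simp add: power3_eq_cube abs_mult)
    finally show "norm (real n * sqrt (real n) * c n) \<le> norm ((real n + 1) ^ 3 * (2 * ra) ^ n) * 1" .
  qed
qed

lemma Xp_lim: "(\<lambda>n. X n * real (p n)) \<longlonglongrightarrow> LL * suminf c / 2"
proof -
  have "(\<lambda>n. - (- (\<Sum>j<n. f j n) + real n * sqrt (real n) * c n) / 2) \<longlonglongrightarrow> - (- (LL * suminf c) + 0) / 2"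
    by (intro tendsto_intros main_lim Xc0) simp_all
  moreover have "eventually (\<lambda>n. - (- (\<Sum>j<n. f j n) + real n * sqrt (real n) * c n) / 2 = X n * real (p n)) sequentially"
    using eventually_ge_at_top[of 1]
  proof eventually_elim
    case (elim n)
    show ?case using XS[OF elim] SS_nth[OF elim] by simp
  qed
  ultimately show ?thesis by (simp add: Lim_transform_eventually)
qed

lemma alg_id:
  fixes s :: real assumes "s ^ 2 = 5"
  shows "4 * ((s - 1) / 4) - 24 * ((s - 1) / 4) ^ 3 = (1 - (1 - s) * ((s - 1) / 4)) * (1 - 2 * ((s - 1) / 4))"
proof -
  have d: "4 * ((s - 1) / 4) - 24 * ((s - 1) / 4) ^ 3 - (1 - (1 - s) * ((s - 1) / 4)) * (1 - 2 * ((s - 1) / 4))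
        = - (s ^ 2 - 5) * (s - 2) / 4"
    by (simp add: field_simps power2_eq_square power3_eq_cube)
  show ?thesis using d assms by simp
qed

theorem mainTheorem6:
  fixes R :: real
  assumes "R = (sqrt 5 - 1) / 4"
  shows "(\<lambda>n. (1/4 * sqrt ((4*R - 24*R^3) / (pi * real n ^ 3)) * (1/R) ^ n) / real (p n))
           \<longlonglongrightarrow> 1"
proof -
  have R: "R = ra" using assms by (simp add: ra_def)
  define A where "A = (1 - b0 * ra) * (1 - 2 * ra)"
  have c0: "4*ra - 24*ra^3 = A" unfolding A_def ra_def b0_def by (rule alg_id) simp
  have Apos: "A > 0" unfolding A_def using b0ra_abs rho_lt1 by (intro mult_pos_pos) auto
  define K where "K = LL * suminf c / 2"
  have K: "K = sqrt A / (4 * sqrt pi)"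
    unfolding K_def c_sum LL_def A_def using b0ra_abs rho_lt1 by (simp add: real_sqrt_mult)
  have Kpos: "K > 0" unfolding K using Apos by simp
  define N where "N n = 1/4 * sqrt ((4*R - 24*R^3) / (pi * real n ^ 3)) * (1/R) ^ n" for n
  have XN: "X n * N n = K" if n: "n \<ge> 1" for n
  proof -
    have n0: "real n > 0" "sqrt (real n) > 0" using n by simp_all
    have s3: "sqrt (real n ^ 3) = real n * sqrt (real n)"
      by (simp add: power3_eq_cube real_sqrt_mult)
    have rr: "ra ^ n * (1 / ra) ^ n = 1" using ra_pos by (simp add: power_one_over)
    have sN: "sqrt (A / (pi * real n ^ 3)) = sqrt A / (sqrt pi * (real n * sqrt (real n)))"
      by (simp add: real_sqrt_divide real_sqrt_mult s3)
    have "X n * N n = (real n * sqrt (real n) * ra ^ n) * (1/4 * (sqrt A / (sqrt pi * (real n * sqrt (real n)))) * (1/ra) ^ n)"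
      unfolding X_def N_def R c0 sN ..
    also have "\<dots> = (ra ^ n * (1 / ra) ^ n) * ((real n * sqrt (real n)) / (real n * sqrt (real n))) * (sqrt A / (4 * sqrt pi))"
      by (simp add: field_simps)
    also have "\<dots> = K" unfolding rr K using n0 by simp
    finally show ?thesis .
  qed
  have "(\<lambda>n. (X n * N n) / (X n * real (p n))) \<longlonglongrightarrow> K / K"
  proof (rule tendsto_divide)
    show "(\<lambda>n. X n * N n) \<longlonglongrightarrow> K"
    proof (rule Lim_transform_eventually[OF tendsto_const])
      show "eventually (\<lambda>n. K = X n * N n) sequentially"
        using eventually_ge_at_top[of 1] by eventually_elim (simp add: XN)
    qed
    show "(\<lambda>n. X n * real (p n)) \<longlonglongrightarrow> K" unfolding K_def by (rule Xp_lim)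
  qed (use Kpos in simp)
  hence lim: "(\<lambda>n. (X n * N n) / (X n * real (p n))) \<longlonglongrightarrow> 1" using Kpos by simp
  have "eventually (\<lambda>n. (X n * N n) / (X n * real (p n)) = N n / real (p n)) sequentially"
    using eventually_ge_at_top[of 1]
  proof eventually_elim
    case (elim n)
    have "X n \<noteq> 0" using elim ra_pos by (simp add: X_def)
    thus ?case by simp
  qed
  from Lim_transform_eventually[OF lim this] show ?thesis unfolding N_def .
qed

end
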